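(* Let $(D,\chi)$ be a shaped oriented link diagram with flattening $\mathfrak f$, and let $c$ be a crossing of $D$ of sign $\epsilon$, with local parameters $\mu_1,\mu_2$ (of the strands through $1$ and $2$), $\beta_1,\beta_2,\beta_{1'},\beta_{2'}$, $\gamma_N,\gamma_W,\gamma_S,\gamma_E$. If one of these local parameters $x$ is replaced by $x+k$ with $k\in\mathbb Z$ (all others unchanged), then $\mathcal V(c,\mathfrak f)$ changes by $2\pi^2 i\,k$ times the corresponding coefficient below (modulo $2\pi^2 i\mathbb Z$): \[ \begin{aligned} \mu_1&:\ -\epsilon(\beta_{1'}-\beta_1)+\gamma_W-\gamma_S, & \mu_2&:\ \epsilon(\beta_{2'}-\beta_2)+\gamma_S-\gamma_E,\\ \beta_1&:\ \gamma_W-\gamma_N-\epsilon\mu_1, & \beta_2&:\ \gamma_S-\gamma_W+\epsilon\mu_2,\\ \beta_{1'}&:\ \gamma_E-\gamma_S+\epsilon\mu_1, & \beta_{2'}&:\ \gamma_N-\gamma_E-\epsilon\mu_2,\\ \gamma_N&:\ \beta_1-\beta_{2'}, & \gamma_W&:\ \beta_2-\beta_1-\mu_1,\\ \gamma_S&:\ \beta_{1'}+\mu_1-\beta_2-\mu_2, & \gamma_E&:\ \beta_{2'}+\mu_2-\beta_{1'}. \end{aligned} \]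
   Context: Oriented link diagram $D$; segments are edges of its underlying $4$-valent planar graph, regions are components of the complement. At each crossing, rotate so both strands point right; label incoming upper-left segment $1$, incoming lower-left segment $2$, outgoing lower-right $1'$ (continuation of $1$), outgoing upper-right $2'$ (continuation of $2$); regions $N$ (top), $S$ (bottom), $W$ (left), $E$ (right); $\epsilon=\pm1$ the crossing sign. A shaping assigns $\chi_i=(a_i,b_i,m_i)\in(\mathbb C^\times)^3$ to segments with, at each crossing, $m_{1'}=m_1,m_{2'}=m_2$ and (positive) $A=1-\frac{m_1b_1}{b_2}(1-\frac{a_1}{m_1})(1-\frac{1}{m_2a_2})$, $a_{1'}=a_1/A$, $a_{2'}=a_2A$, $b_{1'}=\frac{m_2b_2}{m_1}(1-m_2a_2(1-\frac{b_2}{m_1b_1}))^{-1}$, $b_{2'}=b_1(1-\frac{m_1}{a_1}(1-\frac{b_2}{m_1b_1}))$, or (negative) $\tilde A=1-\frac{b_2}{m_1b_1}(1-m_1a_1)(1-\frac{m_2}{a_2})$, $a_{1'}=a_1/\tilde A$, $a_{2'}=a_2\tilde A$, $b_{1'}=\frac{m_2b_2}{m_1}(1-\frac{a_2}{m_2}(1-\frac{m_1b_1}{b_2}))$, $b_{2'}=b_1(1-\frac{1}{m_1a_1}(1-\frac{m_1b_1}{b_2}))^{-1}$, all finite nonzero. Pinched: $b_{2'}=b_1$. Flattening: $\mu_j$ per component ($e^{2\pi i\mu_j}=m_j$), $\beta_k$ per segment ($e^{2\pi i\beta_k}=b_k$), $\gamma_R$ per region ($e^{2\pi i(\gamma_{R'}-\gamma_R)}=a_k$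 when $R',R$ lie right, left of segment $k$), $\kappa$ at each non-pinched crossing with $e^{2\pi i\kappa}=e^{2\pi i\gamma_N}/(1-(b_{2'}/b_1)^\epsilon)$. Lifted dilogarithm: for $w=e^{\zeta^0}\ne1$, $e^{\zeta^1}(1-w)=1$, $p^0=(\zeta^0-\operatorname{Log}w)/2\pi i$, $p^1=(\zeta^1+\operatorname{Log}(1-w))/2\pi i$, $\mathcal L(\zeta^0,\zeta^1)=\operatorname{Li}_2(w)+\frac12\operatorname{Log}w\operatorname{Log}(1-w)-\frac{\pi^2}6+\pi i(p^0\operatorname{Log}(1-w)+p^1\operatorname{Log}w)\in\mathbb C/2\pi^2\mathbb Z$ (continuous extension understood). Non-pinched crossing: $\zeta_N^0=2\pi i\epsilon(\beta_{2'}-\beta_1)$, $\zeta_N^1=2\pi i(\kappa-\gamma_N)$; $\zeta_W^0=2\pi i\epsilon(\beta_2-\beta_1-\mu_1)$, $\zeta_W^1=2\pi i(\kappa-\gamma_W+\epsilon\mu_1)$; $\zeta_S^0=2\pi i\epsilon(\beta_2-\beta_{1'}+\mu_2-\mu_1)$, $\zeta_S^1=2\pi i(\kappa-\gamma_S+\epsilon(\mu_1-\mu_2))$; $\zeta_E^0=2\pi i\epsilon(\beta_{2'}-\beta_{1'}+\mu_2)$, $\zeta_E^1=2\pi i(\kappa-\gamma_E-\epsilon\mu_2)$; $\mathcal V(c,\mathfrak f)=-i\epsilon[\mathcal L(\zeta_N^0,\zeta_N^1)-\mathcal L(\zeta_W^0,\zeta_W^1)+\mathcal L(\zeta_S^0,\zeta_S^1)-\mathcal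 L(\zeta_E^0,\zeta_E^1)]\in\mathbb C/2\pi^2 i\mathbb Z$. Pinched crossing: $\mathcal V(c,\mathfrak f)=2\pi^2 i[\beta_1(\gamma_W-\gamma_N)-\beta_{1'}(\gamma_S-\gamma_E)+\beta_2(\gamma_S-\gamma_W)-\beta_{2'}(\gamma_E-\gamma_N)-\mu_1(\epsilon(\beta_1-\beta_{1'}+\mu_2)+\gamma_S-\gamma_W)-\mu_2(\epsilon(\beta_{2'}-\beta_2+\mu_1)+\gamma_E-\gamma_S)]$. *)

theory Defs
  imports "HOL-Analysis.Analysis"
begin

text \<open>It is analytic on the complement of the ray [1,oo); on that ray it takes the
  boundary value obtained from the side Im w < 0.\<close>
definition Li2 :: "complex \<Rightarrow> complex" where
  "Li2 w = - integral {0..1::real} (\<lambda>s. Ln (1 - of_real s * w) / of_real s)"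

text \<open>Lifted dilogarithm L(zeta0, zeta1), a representative in C (the paper's value is its
  class in C modulo 2 pi^2 Z).  Here w = exp zeta0.\<close>
definition Lcal :: "complex \<Rightarrow> complex \<Rightarrow> complex" where
  "Lcal z0 z1 =
     (let w = exp z0;
          p0 = (z0 - Ln w) / (2 * of_real pi * \<i>);
          p1 = (z1 + Ln (1 - w)) / (2 * of_real pi * \<i>)
      in Li2 w + Ln w * Ln (1 - w) / 2 - of_real (pi^2) / 6
         + of_real pi * \<i> * (p0 * Ln (1 - w) + p1 * Ln w))"

text \<open>Shape parameters on the four segments 1, 2, 1', 2' at the crossing
  (primes written as suffix p), together with the meridian parameters m1 = m1', m2 = m2'.\<close>
record shape_loc =
  a1 :: complex  a2 :: complex  a1p :: complex  a2p :: complex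
  b1 :: complex  b2 :: complex  b1p :: complex  b2p :: complex
  m1 :: complex  m2 :: complex

record flat_loc =
  mu1 :: complex  mu2 :: complex
  beta1 :: complex  beta2 :: complex  beta1p :: complex  beta2p :: complex
  gN :: complex  gW :: complex  gS :: complex  gE :: complex
  kappa :: complex

definition pinched :: "shape_loc \<Rightarrow> bool" where
  "pinched s \<longleftrightarrow> b2p s = b1 s"

definition shaping_at_crossing :: "int \<Rightarrow> shape_loc \<Rightarrow> bool" where
  "shaping_at_crossing eps s \<longleftrightarrow>
     (eps = 1 \<or> eps = -1) \<and>
     a1 s \<noteq> 0 \<and> a2 s \<noteq> 0 \<and> a1p s \<noteq> 0 \<and> a2p s \<noteq> 0 \<and>
     b1 s \<noteq> 0 \<and> b2 s \<noteq> 0 \<and> b1p s \<noteq> 0 \<and> b2p s \<noteq> 0 \<and>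
     m1 s \<noteq> 0 \<and> m2 s \<noteq> 0 \<and>
     (eps = 1 \<longrightarrow>
        (let A = 1 - m1 s * b1 s / b2 s * (1 - a1 s / m1 s) * (1 - 1 / (m2 s * a2 s));
             D = 1 - m2 s * a2 s * (1 - b2 s / (m1 s * b1 s))
         in A \<noteq> 0 \<and> D \<noteq> 0 \<and>
            a1p s = a1 s / A \<and> a2p s = a2 s * A \<and>
            b1p s = m2 s * b2 s / m1 s / D \<and>
            b2p s = b1 s * (1 - m1 s / a1 s * (1 - b2 s / (m1 s * b1 s))))) \<and>
     (eps = -1 \<longrightarrow>
        (let At = 1 - b2 s / (m1 s * b1 s) * (1 - m1 s * a1 s) * (1 - m2 s / a2 s);
             D = 1 - 1 / (m1 s * a1 s) * (1 - m1 s * b1 s / b2 s)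
         in At \<noteq> 0 \<and> D \<noteq> 0 \<and>
            a1p s = a1 s / At \<and> a2p s = a2 s * At \<and>
            b1p s = m2 s * b2 s / m1 s * (1 - a2 s / m2 s * (1 - m1 s * b1 s / b2 s)) \<and>
            b2p s = b1 s / D))"

abbreviation e2pi :: "complex \<Rightarrow> complex" where
  "e2pi x \<equiv> exp (2 * of_real pi * \<i> * x)"

text \<open>Flattening conditions at the crossing.  With both strands pointing right:
  segment 1 has N on its left and W on its right, 2 has W left / S right,
  1' has E left / S right, 2' has N left / E right.\<close>
definition flattening_at_crossing :: "int \<Rightarrow> shape_loc \<Rightarrow> flat_loc \<Rightarrow> bool" where
  "flattening_at_crossing eps s f \<longleftrightarrow>
     e2pi (mu1 f) = m1 s \<and> e2pi (mu2 f) = m2 s \<and>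
     e2pi (beta1 f) = b1 s \<and> e2pi (beta2 f) = b2 s \<and>
     e2pi (beta1p f) = b1p s \<and> e2pi (beta2p f) = b2p s \<and>
     e2pi (gW f - gN f) = a1 s \<and> e2pi (gS f - gW f) = a2 s \<and>
     e2pi (gS f - gE f) = a1p s \<and> e2pi (gE f - gN f) = a2p s \<and>
     (\<not> pinched s \<longrightarrow>
        e2pi (kappa f) = e2pi (gN f) / (1 - (b2p s / b1 s) powi eps))"

text \<open>The crossing contribution V(c, f), as a representative in C
  (the paper's value is its class modulo 2 pi^2 i Z).\<close>
definition Vcross :: "int \<Rightarrow> shape_loc \<Rightarrow> flat_loc \<Rightarrow> complex" where
  "Vcross eps s f =
    (let e = of_int eps :: complex; t = 2 * of_real pi * \<i>;
         M1 = mu1 f; M2 = mu2 f; B1 = beta1 f; B2 = beta2 f; B1p = beta1p f; B2p = beta2p f;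
         N = gN f; W = gW f; S = gS f; E = gE f; K = kappa f
     in if pinched s then
          2 * of_real (pi^2) * \<i> *
            (B1 * (W - N) - B1p * (S - E) + B2 * (S - W) - B2p * (E - N)
             - M1 * (e * (B1 - B1p + M2) + S - W)
             - M2 * (e * (B2p - B2 + M1) + E - S))
        else
          - \<i> * e *
            (Lcal (t * e * (B2p - B1)) (t * (K - N))
             - Lcal (t * e * (B2 - B1 - M1)) (t * (K - W + e * M1))
             + Lcal (t * e * (B2 - B1p + M2 - M1)) (t * (K - S + e * (M1 - M2)))
             - Lcal (t * e * (B2p - B1p + M2)) (t * (K - E - e * M2))))"

definition cong_2pi2i :: "complex \<Rightarrow> complex \<Rightarrow> bool" where
  "cong_2pi2i x y \<longleftrightarrow> (\<exists>n::int. x - y = 2 * of_real (pi^2) * \<i> * of_int n)"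

end

theory Submission
  imports Defs
begin


lemma e2pi_shift: "exp (z + 2 * of_real pi * \<i> * of_int a) = exp z"
proof -
  have "z + 2 * of_real pi * \<i> * of_int a = z + \<i> * (of_int a * (of_real pi * 2))" by (simp add: algebra_simps)
  then show ?thesis by (simp only: exp_plus_2pin)
qed

lemma Lcal_shift:
  fixes z0 z1 :: complex and a b :: int
  assumes H: "exp z1 * (1 - exp z0) = 1"
  shows "\<exists>n::int. Lcal (z0 + 2* of_real pi*\<i>* of_int a) (z1 + 2* of_real pi*\<i>* of_int b)
     = Lcal z0 z1 + of_real pi*\<i>*(of_int b * z0 - of_int a * z1) + 2* of_real(pi^2)* of_int n"
proof -
  define w where "w = exp z0"
  define t where "t = 2* of_real pi*\<i>"
  have t0: "t \<noteq> 0" by (simp add: t_def)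
  have w0: "w \<noteq> 0" by (simp add: w_def)
  have w1: "1 - w \<noteq> 0" using H w_def by auto
  have "exp (Ln w) = exp z0" using w0 w_def by simp
  then obtain n0 :: int where n0: "Ln w = z0 + of_int (2*n0) * pi * \<i>" using exp_eq by blast
  have "exp (Ln (1 - w)) = exp (- z1)" using w1 H w_def
    by (simp add: exp_minus field_simps)
  then obtain n1 :: int where n1: "Ln (1 - w) = - z1 + of_int (2*n1) * pi * \<i>" using exp_eq by blast
  have e: "exp (z0 + t * of_int a) = w" unfolding w_def t_def by (rule e2pi_shift)
  have p0: "(z0 + t * of_int a - Ln w) / t = (z0 - Ln w)/t + of_int a" using t0 by (simp add: field_simps)
  have p1: "(z1 + t * of_int b + Ln (1 - w)) / t = (z1 + Ln (1 - w))/t + of_int b" using t0 by (simp add: field_simps)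
  have "Lcal (z0 + t* of_int a) (z1 + t* of_int b) - Lcal z0 z1
        = of_real pi * \<i> * (of_int a * Ln (1 - w) + of_int b * Ln w)"
    unfolding Lcal_def Let_def e p0 p1 w_def[symmetric] t_def[symmetric]
    by (simp add: algebra_simps)
  also have "\<dots> = of_real pi*\<i>*(of_int b * z0 - of_int a * z1) + 2* of_real(pi^2)* of_int (- b*n0 - a*n1)"
    unfolding n0 n1 by (simp add: algebra_simps power2_eq_square)
  finally show ?thesis unfolding t_def by (intro exI[of _ "- b*n0 - a*n1"]) (simp add: algebra_simps)
qed


definition "zN0 eps f = 2 * of_real pi * \<i> * of_int eps * (beta2p f - beta1 f)"
definition "zN1 (eps::int) f = 2 * of_real pi * \<i> * (kappa f - gN f)"
definition "zW0 eps f = 2 * of_real pi * \<i> * of_int eps * (beta2 f - beta1 f - mu1 f)"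
definition "zW1 eps f = 2 * of_real pi * \<i> * (kappa f - gW f + of_int eps * mu1 f)"
definition "zS0 eps f = 2 * of_real pi * \<i> * of_int eps * (beta2 f - beta1p f + mu2 f - mu1 f)"
definition "zS1 eps f = 2 * of_real pi * \<i> * (kappa f - gS f + of_int eps * (mu1 f - mu2 f))"
definition "zE0 eps f = 2 * of_real pi * \<i> * of_int eps * (beta2p f - beta1p f + mu2 f)"
definition "zE1 eps f = 2 * of_real pi * \<i> * (kappa f - gE f - of_int eps * mu2 f)"

lemma Vcross_np: "\<not> pinched s \<Longrightarrow> Vcross eps s f = - \<i> * of_int eps *
   (Lcal (zN0 eps f) (zN1 eps f) - Lcal (zW0 eps f) (zW1 eps f)
    + Lcal (zS0 eps f) (zS1 eps f) - Lcal (zE0 eps f) (zE1 eps f))"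
  unfolding Vcross_def Let_def zN0_def zN1_def zW0_def zW1_def zS0_def zS1_def zE0_def zE1_def
  by simp

lemma e2pi_add: "exp (2 * of_real pi * \<i> * (x + y)) = exp (2 * of_real pi * \<i> * x) * exp (2 * of_real pi * \<i> * y)"
  by (simp add: distrib_left exp_add)
lemma e2pi_diff: "exp (2 * of_real pi * \<i> * (x - y)) = exp (2 * of_real pi * \<i> * x) / exp (2 * of_real pi * \<i> * y)"
  by (simp add: right_diff_distrib exp_diff)

lemma conds:
  assumes sh: "shaping_at_crossing eps s" and fl: "flattening_at_crossing eps s f" and np: "\<not> pinched s"
  shows "exp (zN1 eps f) * (1 - exp (zN0 eps f)) = 1 \<and> exp (zW1 eps f) * (1 - exp (zW0 eps f)) = 1
    \<and> exp (zS1 eps f) * (1 - exp (zS0 eps f)) = 1 \<and> exp (zE1 eps f) * (1 - exp (zE0 eps f)) = 1"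
proof -
  define GN where "GN = e2pi (gN f)"
  have GN0: "GN \<noteq> 0" unfolding GN_def by simp
  have fl': "e2pi (mu1 f) = m1 s" "e2pi (mu2 f) = m2 s" "e2pi (beta1 f) = b1 s" "e2pi (beta2 f) = b2 s"
     "e2pi (beta1p f) = b1p s" "e2pi (beta2p f) = b2p s"
    and gg: "e2pi (gW f - gN f) = a1 s" "e2pi (gS f - gW f) = a2 s" "e2pi (gS f - gE f) = a1p s" "e2pi (gE f - gN f) = a2p s"
    and kk: "e2pi (kappa f) = e2pi (gN f) / (1 - (b2p s / b1 s) powi eps)"
    using fl np unfolding flattening_at_crossing_def by auto
  have gW: "e2pi (gW f) = a1 s * GN" using gg(1) unfolding e2pi_diff GN_def by (simp add: field_simps)
  have gS: "e2pi (gS f) = a2 s * a1 s * GN" using gg(2) gW unfolding e2pi_diff GN_def by (simp add: field_simps)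
  have gE: "e2pi (gE f) = a2p s * GN" using gg(4) unfolding e2pi_diff GN_def by (simp add: field_simps)
  have kk': "e2pi (kappa f) = GN / (1 - (b2p s / b1 s) powi eps)" using kk GN_def by simp
  have ne: "a1 s \<noteq> 0" "a2 s \<noteq> 0" "a1p s \<noteq> 0" "a2p s \<noteq> 0" "b1 s \<noteq> 0" "b2 s \<noteq> 0" "b1p s \<noteq> 0" "b2p s \<noteq> 0"
     "m1 s \<noteq> 0" "m2 s \<noteq> 0" using sh unfolding shaping_at_crossing_def by auto
  have q1: "b2p s \<noteq> b1 s" using np unfolding pinched_def by auto
  have "eps = 1 \<or> eps = -1" using sh unfolding shaping_at_crossing_def by auto
  then show ?thesis
  proof
    assume e: "eps = 1"
    define A where "A = 1 - m1 s * b1 s / b2 s * (1 - a1 s / m1 s) * (1 - 1 / (m2 s * a2 s))"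
    define D where "D = 1 - m2 s * a2 s * (1 - b2 s / (m1 s * b1 s))"
    have sh1: "A \<noteq> 0" "D \<noteq> 0" "a1p s = a1 s / A" "a2p s = a2 s * A" "b1p s = m2 s * b2 s / m1 s / D"
            "b2p s = b1 s * (1 - m1 s / a1 s * (1 - b2 s / (m1 s * b1 s)))"
      using sh e unfolding shaping_at_crossing_def A_def D_def Let_def by auto
    have q: "1 - b2p s / b1 s \<noteq> 0" using q1 ne by (simp add: field_simps)
    show ?thesis unfolding e zN0_def zN1_def zW0_def zW1_def zS0_def zS1_def zE0_def zE1_def
      apply (simp only: of_int_1 mult_1_right mult_1_left power_int_1_right e2pi_add e2pi_diff fl' gW gS gE kk' e GN_def[symmetric])
      apply (intro conjI)
      subgoal using q GN0 ne by (simp add: field_simps)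
      subgoal using q GN0 ne unfolding sh1(6) by (simp add: field_simps)
      subgoal using q GN0 ne sh1(2) unfolding sh1(5,6) D_def by (simp add: field_simps)
      subgoal proof -
        have k1: "b2p s / b1p s * m2 s = b2p s * m1 s * D / b2 s" using sh1(2) ne unfolding sh1(5) by (simp add: field_simps)
        have k2: "1 - b2p s * m1 s * D / b2 s = a2 s * A * m2 s * (1 - b2p s / b1 s)"
          using ne unfolding sh1(6) D_def A_def by (simp add: field_simps)
        show ?thesis unfolding k1 k2 using q GN0 ne sh1(1) unfolding sh1(4) by (simp add: field_simps)
      qed
      done
  next
    assume e: "eps = -1"
    define A where "A = 1 - b2 s / (m1 s * b1 s) * (1 - m1 s * a1 s) * (1 - m2 s / a2 s)"
    define D where "D = 1 - 1 / (m1 s * a1 s) * (1 - m1 s * b1 s / b2 s)"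
    have sh1: "A \<noteq> 0" "D \<noteq> 0" "a1p s = a1 s / A" "a2p s = a2 s * A"
            "b1p s = m2 s * b2 s / m1 s * (1 - a2 s / m2 s * (1 - m1 s * b1 s / b2 s))"
            "b2p s = b1 s / D"
      using sh e unfolding shaping_at_crossing_def A_def D_def Let_def by auto
    have Qd: "inverse (b2p s / b1 s) = D" using sh1 ne by (simp add: field_simps)
    have D1: "1 - D \<noteq> 0" using q1 sh1(2,6) ne by (auto simp: field_simps)
    have kW: "1 - inverse (b2 s / b1 s / m1 s) = a1 s * m1 s * (1 - D)"
      using ne unfolding D_def by (simp add: field_simps)
    have kS: "1 - inverse (b2 s / b1p s * m2 s / m1 s) = a2 s * a1 s * (m1 s / m2 s) * (1 - D)"
      using ne unfolding D_def sh1(5) by (simp add: field_simps)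
    have kE0: "inverse (b2p s / b1p s * m2 s) = b1p s * D / (b1 s * m2 s)"
      using ne sh1(2) unfolding sh1(6) by (simp add: field_simps)
    have kE: "1 - b1p s * D / (b1 s * m2 s) = a2 s * A * (1 - D) / m2 s"
      using ne unfolding D_def A_def sh1(5) by (simp add: field_simps)
    show ?thesis unfolding e zN0_def zN1_def zW0_def zW1_def zS0_def zS1_def zE0_def zE1_def
      apply (simp only: of_int_minus of_int_1 mult_minus1 mult_minus1_right mult_minus_left exp_minus
          add_uminus_conv_diff diff_minus_eq_add minus_diff_eq power_int_minus power_int_1_right mult_1_left
          e2pi_add e2pi_diff fl' gW gS gE kk' e GN_def[symmetric])
      apply (unfold Qd kW kS kE0 kE sh1(4))
      using D1 GN0 ne sh1(1) by (simp add: field_simps)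
  qed
qed

lemma Vshift:
  assumes np: "\<not> pinched s"
  and C: "exp (zN1 eps f) * (1 - exp (zN0 eps f)) = 1 \<and> exp (zW1 eps f) * (1 - exp (zW0 eps f)) = 1
    \<and> exp (zS1 eps f) * (1 - exp (zS0 eps f)) = 1 \<and> exp (zE1 eps f) * (1 - exp (zE0 eps f)) = 1"
  and zN: "zN0 eps f' = zN0 eps f + 2 * of_real pi * \<i> * of_int aN" "zN1 eps f' = zN1 eps f + 2 * of_real pi * \<i> * of_int bN"
  and zW: "zW0 eps f' = zW0 eps f + 2 * of_real pi * \<i> * of_int aW" "zW1 eps f' = zW1 eps f + 2 * of_real pi * \<i> * of_int bW"
  and zS: "zS0 eps f' = zS0 eps f + 2 * of_real pi * \<i> * of_int aS" "zS1 eps f' = zS1 eps f + 2 * of_real pi * \<i> * of_int bS"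
  and zE: "zE0 eps f' = zE0 eps f + 2 * of_real pi * \<i> * of_int aE" "zE1 eps f' = zE1 eps f + 2 * of_real pi * \<i> * of_int bE"
  and alg: "- \<i> * of_int eps * (of_real pi * \<i> * (of_int bN * zN0 eps f - of_int aN * zN1 eps f)
      - of_real pi * \<i> * (of_int bW * zW0 eps f - of_int aW * zW1 eps f)
      + of_real pi * \<i> * (of_int bS * zS0 eps f - of_int aS * zS1 eps f)
      - of_real pi * \<i> * (of_int bE * zE0 eps f - of_int aE * zE1 eps f)) = X"
  shows "cong_2pi2i (Vcross eps s f') (Vcross eps s f + X)"
proof -
  obtain nN where nN: "Lcal (zN0 eps f') (zN1 eps f') = Lcal (zN0 eps f) (zN1 eps f)
     + of_real pi * \<i> * (of_int bN * zN0 eps f - of_int aN * zN1 eps f) + 2 * of_real (pi^2) * of_int nN"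
    using Lcal_shift[of "zN1 eps f" "zN0 eps f" aN bN] C unfolding zN by blast
  obtain nW where nW: "Lcal (zW0 eps f') (zW1 eps f') = Lcal (zW0 eps f) (zW1 eps f)
     + of_real pi * \<i> * (of_int bW * zW0 eps f - of_int aW * zW1 eps f) + 2 * of_real (pi^2) * of_int nW"
    using Lcal_shift[of "zW1 eps f" "zW0 eps f" aW bW] C unfolding zW by blast
  obtain nS where nS: "Lcal (zS0 eps f') (zS1 eps f') = Lcal (zS0 eps f) (zS1 eps f)
     + of_real pi * \<i> * (of_int bS * zS0 eps f - of_int aS * zS1 eps f) + 2 * of_real (pi^2) * of_int nS"
    using Lcal_shift[of "zS1 eps f" "zS0 eps f" aS bS] C unfolding zS by blast
  obtain nE where nE: "Lcal (zE0 eps f') (zE1 eps f') = Lcal (zE0 eps f) (zE1 eps f)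
     + of_real pi * \<i> * (of_int bE * zE0 eps f - of_int aE * zE1 eps f) + 2 * of_real (pi^2) * of_int nE"
    using Lcal_shift[of "zE1 eps f" "zE0 eps f" aE bE] C unfolding zE by blast
  show ?thesis unfolding cong_2pi2i_def Vcross_np[OF np] nN nW nS nE alg[symmetric]
    by (rule exI[of _ "- eps * (nN - nW + nS - nE)"]) (simp add: algebra_simps)
qed

lemma e2pi_eqD: "e2pi x = e2pi y \<Longrightarrow> \<exists>n::int. x = y + of_int n"
proof -
  assume "e2pi x = e2pi y"
  then obtain n :: int where "2 * of_real pi * \<i> * x = 2 * of_real pi * \<i> * y + of_int (2 * n) * pi * \<i>"
    using exp_eq by blast
  then have "2 * of_real pi * \<i> * x = 2 * of_real pi * \<i> * (y + of_int n)" by (simp add: algebra_simps)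
  then show ?thesis by auto
qed

lemma pinched_ints:
  assumes sh: "shaping_at_crossing eps s" and fl: "flattening_at_crossing eps s f" and p: "pinched s"
  shows "\<exists>n1 n2 n3::int. beta2p f = beta1 f + of_int n1 \<and> beta2 f = beta1 f + mu1 f + of_int n2
      \<and> beta1p f = beta1 f + mu2 f + of_int n3"
proof -
  have ne: "a1 s \<noteq> 0" "a2 s \<noteq> 0" "b1 s \<noteq> 0" "b2 s \<noteq> 0" "m1 s \<noteq> 0" "m2 s \<noteq> 0"
    using sh unfolding shaping_at_crossing_def by auto
  have p': "b2p s = b1 s" using p unfolding pinched_def by auto
  have rel: "b2 s = m1 s * b1 s \<and> b1p s = m2 s * b1 s"
  proof -
    have "eps = 1 \<or> eps = -1" using sh unfolding shaping_at_crossing_def by auto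
    then show ?thesis
    proof
      assume e: "eps = 1"
      have h: "b1p s = m2 s * b2 s / m1 s / (1 - m2 s * a2 s * (1 - b2 s / (m1 s * b1 s)))"
            "b2p s = b1 s * (1 - m1 s / a1 s * (1 - b2 s / (m1 s * b1 s)))"
        using sh e unfolding shaping_at_crossing_def Let_def by auto
      have "b2 s = m1 s * b1 s" using h(2) p' ne by (auto simp: field_simps)
      then show ?thesis using h(1) ne by (simp add: field_simps)
    next
      assume e: "eps = -1"
      have h: "b1p s = m2 s * b2 s / m1 s * (1 - a2 s / m2 s * (1 - m1 s * b1 s / b2 s))"
            "b2p s = b1 s / (1 - 1 / (m1 s * a1 s) * (1 - m1 s * b1 s / b2 s))"
            "1 - 1 / (m1 s * a1 s) * (1 - m1 s * b1 s / b2 s) \<noteq> 0"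
        using sh e unfolding shaping_at_crossing_def Let_def by auto
      have "1 - 1 / (m1 s * a1 s) * (1 - m1 s * b1 s / b2 s) = 1" using h(2,3) p' ne
        by (metis div_by_1 divide_cancel_left)
      then have "b2 s = m1 s * b1 s" using ne by (auto simp: field_simps)
      then show ?thesis using h(1) ne by (simp add: field_simps)
    qed
  qed
  have fl': "e2pi (mu1 f) = m1 s" "e2pi (mu2 f) = m2 s" "e2pi (beta1 f) = b1 s" "e2pi (beta2 f) = b2 s"
     "e2pi (beta1p f) = b1p s" "e2pi (beta2p f) = b2p s"
    using fl unfolding flattening_at_crossing_def by auto
  obtain n1 :: int where "beta2p f = beta1 f + of_int n1" using e2pi_eqD[of "beta2p f" "beta1 f"] fl' p' by auto
  moreover have "e2pi (beta2 f) = e2pi (beta1 f + mu1 f)" unfolding e2pi_add fl' using rel by (simp add: mult.commute)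
  then obtain n2 :: int where "beta2 f = (beta1 f + mu1 f) + of_int n2" using e2pi_eqD by blast
  moreover have "e2pi (beta1p f) = e2pi (beta1 f + mu2 f)" unfolding e2pi_add fl' using rel by (simp add: mult.commute)
  then obtain n3 :: int where "beta1p f = (beta1 f + mu2 f) + of_int n3" using e2pi_eqD by blast
  ultimately show ?thesis by blast
qed

lemma shift_mu1:
  fixes eps k :: int
  assumes sh: "shaping_at_crossing eps s" and fl: "flattening_at_crossing eps s f"
  shows "cong_2pi2i (Vcross eps s (f\<lparr>mu1 := mu1 f + of_int k\<rparr>))
    (Vcross eps s f + 2 * of_real (pi^2) * \<i> * of_int k * (- of_int eps * (beta1p f - beta1 f) + gW f - gS f))"
proof (cases "pinched s")
  case True
  obtain n1 n2 n3 :: int where n: "beta2p f = beta1 f + of_int n1" "beta2 f = beta1 f + mu1 f + of_int n2"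
      "beta1p f = beta1 f + mu2 f + of_int n3" using pinched_ints[OF sh fl True] by blast
  show ?thesis unfolding cong_2pi2i_def Vcross_def Let_def using True
    by (intro exI[of _ "2*eps*k*n3"]) (simp add: n algebra_simps power2_eq_square)
next
  case False
  have eps1: "eps = 1 \<or> eps = -1" using sh unfolding shaping_at_crossing_def by auto
  show ?thesis
    apply (rule Vshift[OF False conds[OF sh fl False], where aN="0" and bN="0" and aW="-eps*k" and bW="eps*k" and aS="-eps*k" and bS="eps*k" and aE="0" and bE="0"])
    unfolding zN0_def zN1_def zW0_def zW1_def zS0_def zS1_def zE0_def zE1_def
    apply (simp_all add: algebra_simps)
    using eps1 by (elim disjE) (simp_all add: algebra_simps power2_eq_square)
qed

lemma shift_mu2:
  fixes eps k :: int
  assumes sh: "shaping_at_crossing eps s" and fl: "flattening_at_crossing eps s f"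
  shows "cong_2pi2i (Vcross eps s (f\<lparr>mu2 := mu2 f + of_int k\<rparr>))
    (Vcross eps s f + 2 * of_real (pi^2) * \<i> * of_int k * (of_int eps * (beta2p f - beta2 f) + gS f - gE f))"
proof (cases "pinched s")
  case True
  obtain n1 n2 n3 :: int where n: "beta2p f = beta1 f + of_int n1" "beta2 f = beta1 f + mu1 f + of_int n2"
      "beta1p f = beta1 f + mu2 f + of_int n3" using pinched_ints[OF sh fl True] by blast
  show ?thesis unfolding cong_2pi2i_def Vcross_def Let_def using True
    by (intro exI[of _ "2*eps*k*(n2-n1)"]) (simp add: n algebra_simps power2_eq_square)
next
  case False
  have eps1: "eps = 1 \<or> eps = -1" using sh unfolding shaping_at_crossing_def by auto
  show ?thesis
    apply (rule Vshift[OF False conds[OF sh fl False], where aN="0" and bN="0" and aW="0" and bW="0" and aS="eps*k" and bS="-eps*k" and aE="eps*k" and bE="-eps*k"])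
    unfolding zN0_def zN1_def zW0_def zW1_def zS0_def zS1_def zE0_def zE1_def
    apply (simp_all add: algebra_simps)
    using eps1 by (elim disjE) (simp_all add: algebra_simps power2_eq_square)
qed

lemma shift_beta1:
  fixes eps k :: int
  assumes sh: "shaping_at_crossing eps s" and fl: "flattening_at_crossing eps s f"
  shows "cong_2pi2i (Vcross eps s (f\<lparr>beta1 := beta1 f + of_int k\<rparr>))
    (Vcross eps s f + 2 * of_real (pi^2) * \<i> * of_int k * (gW f - gN f - of_int eps * mu1 f))"
proof (cases "pinched s")
  case True
  obtain n1 n2 n3 :: int where n: "beta2p f = beta1 f + of_int n1" "beta2 f = beta1 f + mu1 f + of_int n2"
      "beta1p f = beta1 f + mu2 f + of_int n3" using pinched_ints[OF sh fl True] by blast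
  show ?thesis unfolding cong_2pi2i_def Vcross_def Let_def using True
    by (intro exI[of _ "0"]) (simp add: n algebra_simps power2_eq_square)
next
  case False
  have eps1: "eps = 1 \<or> eps = -1" using sh unfolding shaping_at_crossing_def by auto
  show ?thesis
    apply (rule Vshift[OF False conds[OF sh fl False], where aN="-eps*k" and bN="0" and aW="-eps*k" and bW="0" and aS="0" and bS="0" and aE="0" and bE="0"])
    unfolding zN0_def zN1_def zW0_def zW1_def zS0_def zS1_def zE0_def zE1_def
    apply (simp_all add: algebra_simps)
    using eps1 by (elim disjE) (simp_all add: algebra_simps power2_eq_square)
qed

lemma shift_beta2:
  fixes eps k :: int
  assumes sh: "shaping_at_crossing eps s" and fl: "flattening_at_crossing eps s f"
  shows "cong_2pi2i (Vcross eps s (f\<lparr>beta2 := beta2 f + of_int k\<rparr>))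
    (Vcross eps s f + 2 * of_real (pi^2) * \<i> * of_int k * (gS f - gW f + of_int eps * mu2 f))"
proof (cases "pinched s")
  case True
  obtain n1 n2 n3 :: int where n: "beta2p f = beta1 f + of_int n1" "beta2 f = beta1 f + mu1 f + of_int n2"
      "beta1p f = beta1 f + mu2 f + of_int n3" using pinched_ints[OF sh fl True] by blast
  show ?thesis unfolding cong_2pi2i_def Vcross_def Let_def using True
    by (intro exI[of _ "0"]) (simp add: n algebra_simps power2_eq_square)
next
  case False
  have eps1: "eps = 1 \<or> eps = -1" using sh unfolding shaping_at_crossing_def by auto
  show ?thesis
    apply (rule Vshift[OF False conds[OF sh fl False], where aN="0" and bN="0" and aW="eps*k" and bW="0" and aS="eps*k" and bS="0" and aE="0" and bE="0"])
    unfolding zN0_def zN1_def zW0_def zW1_def zS0_def zS1_def zE0_def zE1_def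
    apply (simp_all add: algebra_simps)
    using eps1 by (elim disjE) (simp_all add: algebra_simps power2_eq_square)
qed

lemma shift_beta1p:
  fixes eps k :: int
  assumes sh: "shaping_at_crossing eps s" and fl: "flattening_at_crossing eps s f"
  shows "cong_2pi2i (Vcross eps s (f\<lparr>beta1p := beta1p f + of_int k\<rparr>))
    (Vcross eps s f + 2 * of_real (pi^2) * \<i> * of_int k * (gE f - gS f + of_int eps * mu1 f))"
proof (cases "pinched s")
  case True
  obtain n1 n2 n3 :: int where n: "beta2p f = beta1 f + of_int n1" "beta2 f = beta1 f + mu1 f + of_int n2"
      "beta1p f = beta1 f + mu2 f + of_int n3" using pinched_ints[OF sh fl True] by blast
  show ?thesis unfolding cong_2pi2i_def Vcross_def Let_def using True
    by (intro exI[of _ "0"]) (simp add: n algebra_simps power2_eq_square)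
next
  case False
  have eps1: "eps = 1 \<or> eps = -1" using sh unfolding shaping_at_crossing_def by auto
  show ?thesis
    apply (rule Vshift[OF False conds[OF sh fl False], where aN="0" and bN="0" and aW="0" and bW="0" and aS="-eps*k" and bS="0" and aE="-eps*k" and bE="0"])
    unfolding zN0_def zN1_def zW0_def zW1_def zS0_def zS1_def zE0_def zE1_def
    apply (simp_all add: algebra_simps)
    using eps1 by (elim disjE) (simp_all add: algebra_simps power2_eq_square)
qed

lemma shift_beta2p:
  fixes eps k :: int
  assumes sh: "shaping_at_crossing eps s" and fl: "flattening_at_crossing eps s f"
  shows "cong_2pi2i (Vcross eps s (f\<lparr>beta2p := beta2p f + of_int k\<rparr>))
    (Vcross eps s f + 2 * of_real (pi^2) * \<i> * of_int k * (gN f - gE f - of_int eps * mu2 f))"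
proof (cases "pinched s")
  case True
  obtain n1 n2 n3 :: int where n: "beta2p f = beta1 f + of_int n1" "beta2 f = beta1 f + mu1 f + of_int n2"
      "beta1p f = beta1 f + mu2 f + of_int n3" using pinched_ints[OF sh fl True] by blast
  show ?thesis unfolding cong_2pi2i_def Vcross_def Let_def using True
    by (intro exI[of _ "0"]) (simp add: n algebra_simps power2_eq_square)
next
  case False
  have eps1: "eps = 1 \<or> eps = -1" using sh unfolding shaping_at_crossing_def by auto
  show ?thesis
    apply (rule Vshift[OF False conds[OF sh fl False], where aN="eps*k" and bN="0" and aW="0" and bW="0" and aS="0" and bS="0" and aE="eps*k" and bE="0"])
    unfolding zN0_def zN1_def zW0_def zW1_def zS0_def zS1_def zE0_def zE1_def
    apply (simp_all add: algebra_simps)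
    using eps1 by (elim disjE) (simp_all add: algebra_simps power2_eq_square)
qed

lemma shift_gN:
  fixes eps k :: int
  assumes sh: "shaping_at_crossing eps s" and fl: "flattening_at_crossing eps s f"
  shows "cong_2pi2i (Vcross eps s (f\<lparr>gN := gN f + of_int k\<rparr>))
    (Vcross eps s f + 2 * of_real (pi^2) * \<i> * of_int k * (beta1 f - beta2p f))"
proof (cases "pinched s")
  case True
  obtain n1 n2 n3 :: int where n: "beta2p f = beta1 f + of_int n1" "beta2 f = beta1 f + mu1 f + of_int n2"
      "beta1p f = beta1 f + mu2 f + of_int n3" using pinched_ints[OF sh fl True] by blast
  show ?thesis unfolding cong_2pi2i_def Vcross_def Let_def using True
    by (intro exI[of _ "2*k*n1"]) (simp add: n algebra_simps power2_eq_square)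
next
  case False
  have eps1: "eps = 1 \<or> eps = -1" using sh unfolding shaping_at_crossing_def by auto
  show ?thesis
    apply (rule Vshift[OF False conds[OF sh fl False], where aN="0" and bN="-k" and aW="0" and bW="0" and aS="0" and bS="0" and aE="0" and bE="0"])
    unfolding zN0_def zN1_def zW0_def zW1_def zS0_def zS1_def zE0_def zE1_def
    apply (simp_all add: algebra_simps)
    using eps1 by (elim disjE) (simp_all add: algebra_simps power2_eq_square)
qed

lemma shift_gW:
  fixes eps k :: int
  assumes sh: "shaping_at_crossing eps s" and fl: "flattening_at_crossing eps s f"
  shows "cong_2pi2i (Vcross eps s (f\<lparr>gW := gW f + of_int k\<rparr>))
    (Vcross eps s f + 2 * of_real (pi^2) * \<i> * of_int k * (beta2 f - beta1 f - mu1 f))"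
proof (cases "pinched s")
  case True
  obtain n1 n2 n3 :: int where n: "beta2p f = beta1 f + of_int n1" "beta2 f = beta1 f + mu1 f + of_int n2"
      "beta1p f = beta1 f + mu2 f + of_int n3" using pinched_ints[OF sh fl True] by blast
  show ?thesis unfolding cong_2pi2i_def Vcross_def Let_def using True
    by (intro exI[of _ "-2*k*n2"]) (simp add: n algebra_simps power2_eq_square)
next
  case False
  have eps1: "eps = 1 \<or> eps = -1" using sh unfolding shaping_at_crossing_def by auto
  show ?thesis
    apply (rule Vshift[OF False conds[OF sh fl False], where aN="0" and bN="0" and aW="0" and bW="-k" and aS="0" and bS="0" and aE="0" and bE="0"])
    unfolding zN0_def zN1_def zW0_def zW1_def zS0_def zS1_def zE0_def zE1_def
    apply (simp_all add: algebra_simps)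
    using eps1 by (elim disjE) (simp_all add: algebra_simps power2_eq_square)
qed

lemma shift_gS:
  fixes eps k :: int
  assumes sh: "shaping_at_crossing eps s" and fl: "flattening_at_crossing eps s f"
  shows "cong_2pi2i (Vcross eps s (f\<lparr>gS := gS f + of_int k\<rparr>))
    (Vcross eps s f + 2 * of_real (pi^2) * \<i> * of_int k * (beta1p f + mu1 f - beta2 f - mu2 f))"
proof (cases "pinched s")
  case True
  obtain n1 n2 n3 :: int where n: "beta2p f = beta1 f + of_int n1" "beta2 f = beta1 f + mu1 f + of_int n2"
      "beta1p f = beta1 f + mu2 f + of_int n3" using pinched_ints[OF sh fl True] by blast
  show ?thesis unfolding cong_2pi2i_def Vcross_def Let_def using True
    by (intro exI[of _ "-2*k*(n3-n2)"]) (simp add: n algebra_simps power2_eq_square)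
next
  case False
  have eps1: "eps = 1 \<or> eps = -1" using sh unfolding shaping_at_crossing_def by auto
  show ?thesis
    apply (rule Vshift[OF False conds[OF sh fl False], where aN="0" and bN="0" and aW="0" and bW="0" and aS="0" and bS="-k" and aE="0" and bE="0"])
    unfolding zN0_def zN1_def zW0_def zW1_def zS0_def zS1_def zE0_def zE1_def
    apply (simp_all add: algebra_simps)
    using eps1 by (elim disjE) (simp_all add: algebra_simps power2_eq_square)
qed

lemma shift_gE:
  fixes eps k :: int
  assumes sh: "shaping_at_crossing eps s" and fl: "flattening_at_crossing eps s f"
  shows "cong_2pi2i (Vcross eps s (f\<lparr>gE := gE f + of_int k\<rparr>))
    (Vcross eps s f + 2 * of_real (pi^2) * \<i> * of_int k * (beta2p f + mu2 f - beta1p f))"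
proof (cases "pinched s")
  case True
  obtain n1 n2 n3 :: int where n: "beta2p f = beta1 f + of_int n1" "beta2 f = beta1 f + mu1 f + of_int n2"
      "beta1p f = beta1 f + mu2 f + of_int n3" using pinched_ints[OF sh fl True] by blast
  show ?thesis unfolding cong_2pi2i_def Vcross_def Let_def using True
    by (intro exI[of _ "2*k*(n3-n1)"]) (simp add: n algebra_simps power2_eq_square)
next
  case False
  have eps1: "eps = 1 \<or> eps = -1" using sh unfolding shaping_at_crossing_def by auto
  show ?thesis
    apply (rule Vshift[OF False conds[OF sh fl False], where aN="0" and bN="0" and aW="0" and bW="0" and aS="0" and bS="0" and aE="0" and bE="-k"])
    unfolding zN0_def zN1_def zW0_def zW1_def zS0_def zS1_def zE0_def zE1_def
    apply (simp_all add: algebra_simps)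
    using eps1 by (elim disjE) (simp_all add: algebra_simps power2_eq_square)
qed


theorem lemma3p7:
  fixes eps k :: int and s :: shape_loc and f :: flat_loc
  assumes "shaping_at_crossing eps s"
    and "flattening_at_crossing eps s f"
  shows
   "let e = (of_int eps :: complex); c = 2 * of_real (pi^2) * \<i> * of_int k; V = Vcross eps s
    in cong_2pi2i (V (f\<lparr>mu1 := mu1 f + of_int k\<rparr>))
         (V f + c * (- e * (beta1p f - beta1 f) + gW f - gS f)) \<and>
       cong_2pi2i (V (f\<lparr>mu2 := mu2 f + of_int k\<rparr>))
         (V f + c * (e * (beta2p f - beta2 f) + gS f - gE f)) \<and>
       cong_2pi2i (V (f\<lparr>beta1 := beta1 f + of_int k\<rparr>))
         (V f + c * (gW f - gN f - e * mu1 f)) \<and>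
       cong_2pi2i (V (f\<lparr>beta2 := beta2 f + of_int k\<rparr>))
         (V f + c * (gS f - gW f + e * mu2 f)) \<and>
       cong_2pi2i (V (f\<lparr>beta1p := beta1p f + of_int k\<rparr>))
         (V f + c * (gE f - gS f + e * mu1 f)) \<and>
       cong_2pi2i (V (f\<lparr>beta2p := beta2p f + of_int k\<rparr>))
         (V f + c * (gN f - gE f - e * mu2 f)) \<and>
       cong_2pi2i (V (f\<lparr>gN := gN f + of_int k\<rparr>))
         (V f + c * (beta1 f - beta2p f)) \<and>
       cong_2pi2i (V (f\<lparr>gW := gW f + of_int k\<rparr>))
         (V f + c * (beta2 f - beta1 f - mu1 f)) \<and>
       cong_2pi2i (V (f\<lparr>gS := gS f + of_int k\<rparr>))
         (V f + c * (beta1p f + mu1 f - beta2 f - mu2 f)) \<and>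
       cong_2pi2i (V (f\<lparr>gE := gE f + of_int k\<rparr>))
         (V f + c * (beta2p f + mu2 f - beta1p f))"
    unfolding Let_def
  using shift_mu1[OF assms] shift_mu2[OF assms] shift_beta1[OF assms] shift_beta2[OF assms]
    shift_beta1p[OF assms] shift_beta2p[OF assms] shift_gN[OF assms] shift_gW[OF assms]
    shift_gS[OF assms] shift_gE[OF assms]
  by blast

end
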